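(* The set $\{V(n)/\varphi(n) : n\ge1\}$ is dense in the interval $(1,+\infty)$; that is, every nonempty open subinterval of $(1,+\infty)$ contains an element of this set.
   Context: For a positive integer $n$, an integer $a$ is called regular modulo $n$ if there exists an integer $x$ with $a^2x\equiv a \pmod n$. Let $V(n)$ denote the number of integers $a$ with $1\le a\le n$ that are regular modulo $n$. (Known fact: $V$ is multiplicative, $V(1)=1$, and $V(p^{\alpha})=p^{\alpha}-p^{\alpha-1}+1$ for a prime $p$ and $\alpha\ge1$.) $\varphi$ is Euler's totient function. *)

theory Defs
  imports "HOL-Number_Theory.Number_Theory"
begin

definition regular_mod :: "nat \<Rightarrow> int \<Rightarrow> bool" where
  "regular_mod n a \<longleftrightarrow> (\<exists>x::int. [a^2 * x = a] (mod int n))"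

definition V :: "nat \<Rightarrow> nat" where
  "V n = card {a::int. 1 \<le> a \<and> a \<le> int n \<and> regular_mod n a}"

end

theory Submission imports Defs  begin

lemma pow_cong_prime:
  fixes p k T :: nat
  assumes "prime p" "(p - 1) dvd T"
  shows "[k ^ (T+1) = k] (mod p)"
proof (cases "p dvd k")
  case True
  then have "[k = 0] (mod p)" by (simp add: cong_0_iff)
  moreover have "[k ^ (T+1) = 0] (mod p)" using True by (simp add: cong_0_iff)
  ultimately show ?thesis using cong_sym cong_trans by blast
next
  case False
  obtain c where c: "T = (p-1)*c" using assms(2) by blast
  have "[k^(p-1) = 1] (mod p)" using fermat_theorem[OF assms(1) False] .
  then have "[(k^(p-1))^c = 1^c] (mod p)" by (rule cong_pow)
  then have "[k^T = 1] (mod p)" by (simp add: c power_mult)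
  then have "[k^T * k = 1 * k] (mod p)" by (rule cong_mult) simp
  then show ?thesis by (simp add: mult.commute)
qed

lemma reg_prod:
  fixes S :: "nat set"
  assumes "finite S" "\<forall>p\<in>S. prime p"
  shows "regular_mod (\<Prod>S) (int k)"
proof -
  define T where "T = (\<Prod>p\<in>S. p - 1)"
  have T0: "0 < T" unfolding T_def using assms prime_gt_1_nat by (intro prod_pos) auto
  have "[k ^ (T+1) = k] (mod (\<Prod>p\<in>S. id p))"
  proof (rule coprime_cong_prod_nat)
    fix i j assume "i \<in> S" "j \<in> S" "i \<noteq> j"
    then show "coprime (id i) (id j)" using assms by (simp add: primes_coprime)
  next
    fix i assume "i \<in> S"
    then have "(i - 1) dvd T" unfolding T_def using dvd_prodI[where f="\<lambda>p. p - 1", OF assms(1) \<open>i\<in>S\<close>] by simp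
    then show "[k ^ (T+1) = k] (mod id i)" using pow_cong_prime assms \<open>i\<in>S\<close> by simp
  qed
  then have A0: "[k ^ (T+1) = k] (mod (\<Prod>S))" by simp
  have A: "[int k ^ (T+1) = int k] (mod int (\<Prod>S))"
    using A0 unfolding cong_int_iff[symmetric] of_nat_power .
  have e: "T + 1 = 2 + (T - 1)" using T0 by simp
  have B: "int k ^ (T+1) = (int k)^2 * (int k)^(T-1)"
    unfolding e by (rule power_add)
  have "[(int k)^2 * (int k)^(T-1) = int k] (mod int (\<Prod>S))"
    using A unfolding B .
  then show ?thesis unfolding regular_mod_def by blast
qed

lemma V_all:
  assumes "\<And>a::int. 1 \<le> a \<Longrightarrow> regular_mod n a"
  shows "V n = n"
proof -
  have "{a::int. 1 \<le> a \<and> a \<le> int n \<and> regular_mod n a} = {1..int n}"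
    using assms by auto
  then show ?thesis unfolding V_def by simp
qed

lemma V_prod:
  fixes S :: "nat set"
  assumes "finite S" "\<forall>p\<in>S. prime p"
  shows "V (\<Prod>S) = \<Prod>S"
proof (rule V_all)
  fix a :: int assume "1 \<le> a"
  then have "a = int (nat a)" by simp
  moreover have "regular_mod (\<Prod>S) (int (nat a))" by (rule reg_prod[OF assms])
  ultimately show "regular_mod (\<Prod>S) a" by metis
qed

lemma totient_prod_primes:
  fixes S :: "nat set"
  assumes "finite S" "\<forall>p\<in>S. prime p"
  shows "totient (\<Prod>S) = (\<Prod>p\<in>S. p - 1)"
proof -
  have "totient (prod id S) = (\<Prod>a\<in>S. totient (id a))"
    by (rule totient_prod_coprime) (use assms in \<open>auto simp: pairwise_def primes_coprime\<close>)
  then show ?thesis using assms by (simp add: totient_prime)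
qed

lemma geo_bound:
  fixes q :: nat and F :: "nat set"
  assumes "q \<ge> 2" "finite F"
  shows "(\<Sum>j\<in>F. (1 / real q) ^ j) \<le> real q / (real q - 1)"
proof -
  obtain N where N: "F \<subseteq> {..<N}" using assms(2) finite_nat_iff_bounded by auto
  have "(\<Sum>j\<in>F. (1 / real q) ^ j) \<le> (\<Sum>j<N. (1 / real q) ^ j)"
    by (rule sum_mono2) (use N in auto)
  also have "\<dots> = (1 - (1 / real q) ^ N) / (1 - 1 / real q)"
    using assms(1) by (subst sum_gp_strict) auto
  also have "\<dots> \<le> 1 / (1 - 1 / real q)"
    using assms(1) by (intro divide_right_mono) auto
  also have "\<dots> = real q / (real q - 1)"
    using assms(1) by (simp add: field_simps)
  finally show ?thesis .
qed

lemma recip_bound: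
  fixes P :: "nat set"
  assumes "finite P" "\<forall>p\<in>P. prime p"
  shows "\<forall>A. finite A \<longrightarrow> (\<forall>n\<in>A. n > 0 \<and> prime_factors n \<subseteq> P) \<longrightarrow>
           (\<Sum>n\<in>A. 1 / real n) \<le> (\<Prod>p\<in>P. real p / (real p - 1))"
  using assms
proof (induction P rule: finite_induct)
  case empty
  show ?case
  proof (intro allI impI)
    fix A :: "nat set" assume "finite A" and H: "\<forall>n\<in>A. n > 0 \<and> prime_factors n \<subseteq> {}"
    have "A \<subseteq> {1}"
    proof
      fix n assume "n \<in> A"
      then have "n > 0" "prime_factorization n = {#}" using H by auto
      then show "n \<in> {1}" by (simp add: prime_factorization_empty_iff)
    qed
    then have "(\<Sum>n\<in>A. 1 / real n) \<le> (\<Sum>n\<in>{1::nat}. 1 / real n)"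
      by (intro sum_mono2) auto
    then show "(\<Sum>n\<in>A. 1 / real n) \<le> (\<Prod>p\<in>{}. real p / (real p - 1))" by simp
  qed
next
  case (insert q P)
  have q2: "q \<ge> 2" using insert.prems prime_ge_2_nat by auto
  have IH: "\<forall>A. finite A \<longrightarrow> (\<forall>n\<in>A. n > 0 \<and> prime_factors n \<subseteq> P) \<longrightarrow>
           (\<Sum>n\<in>A. 1 / real n) \<le> (\<Prod>p\<in>P. real p / (real p - 1))"
    using insert.IH insert.prems by auto
  have Pnn: "0 \<le> (\<Prod>p\<in>P. real p / (real p - 1))"
  proof (intro prod_nonneg)
    fix p assume "p \<in> P"
    then have "p \<ge> 2" using insert.prems prime_ge_2_nat by auto
    then show "0 \<le> real p / (real p - 1)" by simp
  qed
  show ?case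
  proof (intro allI impI)
    fix A :: "nat set" assume fA: "finite A" and H: "\<forall>n\<in>A. n > 0 \<and> prime_factors n \<subseteq> insert q P"
    define g where "g = (\<lambda>n::nat. (multiplicity q n, n div q ^ multiplicity q n))"
    define B where "B = g ` A"
    define D where "D = fst ` B"
    define C where "C = snd ` B"
    have decomp: "n = q ^ fst (g n) * snd (g n)" for n
      unfolding g_def using multiplicity_dvd[of q n] by simp
    have inj: "inj_on g A"
      by (rule inj_onI) (metis decomp)
    have fB: "finite B" "finite C" "finite D" using fA unfolding B_def C_def D_def by auto
    have BDC: "B \<subseteq> D \<times> C" unfolding D_def C_def by force
    have Cprop: "\<forall>m\<in>C. m > 0 \<and> prime_factors m \<subseteq> P"
    proof
      fix m assume "m \<in> C"
      then obtain n where n: "n \<in> A" "m = n div q ^ multiplicity q n"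
        unfolding C_def B_def g_def by auto
      have npos: "n > 0" and nf: "prime_factors n \<subseteq> insert q P" using H n(1) by auto
      have "n = q ^ multiplicity q n * m" using decomp[of n] n(2) unfolding g_def by simp
      then have mpos: "m > 0" using npos by (cases "m = 0") auto
      have mdvd: "m dvd n" using \<open>n = q ^ multiplicity q n * m\<close> by (metis dvd_triv_right)
      have nq: "\<not> q dvd m" proof -
        have "n \<noteq> 0" "\<not> is_unit q" using npos q2 by auto
        then have "\<not> q dvd n div q ^ multiplicity q n" by (rule multiplicity_decompose)
        then show ?thesis using n(2) by simp
      qed
      have "prime_factors m \<subseteq> P"
      proof
        fix r assume r: "r \<in> prime_factors m"
        then have "r dvd m" "prime r" by (auto simp: in_prime_factors_iff)
        then have "r \<in> prime_factors n" using mdvd npos by (auto simp: in_prime_factors_iff intro: dvd_trans)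
        moreover have "r \<noteq> q" using \<open>r dvd m\<close> nq by auto
        ultimately show "r \<in> P" using nf by auto
      qed
      then show "m > 0 \<and> prime_factors m \<subseteq> P" using mpos by simp
    qed
    define h where "h = (\<lambda>(j::nat, m::nat). (1 / real q) ^ j * (1 / real m))"
    have hnn: "\<And>x. 0 \<le> h x" unfolding h_def by (auto simp: case_prod_beta)
    have "(\<Sum>n\<in>A. 1 / real n) = (\<Sum>n\<in>A. h (g n))"
    proof (rule sum.cong)
      fix n assume "n \<in> A"
      have "real n = real q ^ fst (g n) * real (snd (g n))"
        by (subst decomp[of n]) simp
      then show "1 / real n = h (g n)" unfolding h_def by (simp add: case_prod_beta power_one_over)
    qed simp
    also have "\<dots> = (\<Sum>x\<in>B. h x)" unfolding B_def using sum.reindex[OF inj, of h] by simp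
    also have "\<dots> \<le> (\<Sum>x\<in>D \<times> C. h x)"
      using fB BDC hnn by (intro sum_mono2) auto
    also have "\<dots> = (\<Sum>j\<in>D. (1 / real q) ^ j) * (\<Sum>m\<in>C. 1 / real m)"
      unfolding h_def sum_product sum.cartesian_product by simp
    also have "\<dots> \<le> (real q / (real q - 1)) * (\<Prod>p\<in>P. real p / (real p - 1))"
    proof (rule mult_mono)
      show "(\<Sum>j\<in>D. (1 / real q) ^ j) \<le> real q / (real q - 1)" by (rule geo_bound[OF q2 fB(3)])
      show "(\<Sum>m\<in>C. 1 / real m) \<le> (\<Prod>p\<in>P. real p / (real p - 1))"
        using IH fB(2) Cprop by blast
      show "0 \<le> real q / (real q - 1)" using q2 by simp
      show "0 \<le> (\<Sum>m\<in>C. 1 / real m)" by (rule sum_nonneg) simp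
    qed
    also have "\<dots> = (\<Prod>p\<in>insert q P. real p / (real p - 1))"
      using insert.hyps by simp
    finally show "(\<Sum>n\<in>A. 1 / real n) \<le> (\<Prod>p\<in>insert q P. real p / (real p - 1))" .
  qed
qed

lemma harm_pow2: "1 + real m / 2 \<le> (\<Sum>n\<in>{1..(2::nat)^m}. 1 / real n)"
proof (induction m)
  case 0
  then show ?case by simp
next
  case (Suc m)
  have U: "{1..(2::nat)^Suc m} = {1..2^m} \<union> {2^m<..2^Suc m}" by auto
  have "real (card {(2::nat)^m<..2^Suc m}) * (1 / real ((2::nat)^Suc m))
        \<le> (\<Sum>n\<in>{2^m<..2^Suc m}. 1 / real n)"
  proof (rule sum_bounded_below)
    fix i assume "i \<in> {(2::nat)^m<..2^Suc m}"
    then have "i \<le> 2^Suc m" "0 < i" by auto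
    then have "real i \<le> real ((2::nat)^Suc m)" by (simp only: of_nat_le_iff)
    then show "1 / real ((2::nat)^Suc m) \<le> 1 / real i" using \<open>0 < i\<close> by (intro divide_left_mono) auto
  qed
  moreover have "real (card {(2::nat)^m<..2^Suc m}) * (1 / real ((2::nat)^Suc m)) = 1/2"
    by simp
  ultimately have "1/2 \<le> (\<Sum>n\<in>{(2::nat)^m<..2^Suc m}. 1 / real n)" by simp
  moreover have "(\<Sum>n\<in>{1..(2::nat)^Suc m}. 1 / real n) =
      (\<Sum>n\<in>{1..(2::nat)^m}. 1 / real n) + (\<Sum>n\<in>{2^m<..2^Suc m}. 1 / real n)"
    unfolding U by (rule sum.union_disjoint) auto
  moreover have "real (Suc m) / 2 = real m / 2 + 1/2" by simp
  ultimately show ?case using Suc.IH by linarith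
qed

lemma ratio_prod:
  fixes S :: "nat set"
  assumes "finite S" "\<forall>p\<in>S. prime p"
  shows "real (V (\<Prod>S)) / real (totient (\<Prod>S)) = (\<Prod>p\<in>S. real p / (real p - 1))"
proof -
  have "real (V (\<Prod>S)) = (\<Prod>p\<in>S. real p)" using V_prod[OF assms] by simp
  moreover have "real (totient (\<Prod>S)) = (\<Prod>p\<in>S. real p - 1)"
  proof -
    have "real (totient (\<Prod>S)) = (\<Prod>p\<in>S. real (p - 1))"
      using totient_prod_primes[OF assms] by simp
    also have "\<dots> = (\<Prod>p\<in>S. real p - 1)"
    proof (rule prod.cong)
      fix p assume "p \<in> S"
      then have "p \<ge> 1" using assms prime_ge_1_nat by auto
      then show "real (p - 1) = real p - 1" by (simp add: of_nat_diff)
    qed simp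
    finally show ?thesis .
  qed
  ultimately show ?thesis by (simp add: prod_dividef)
qed

theorem proposition4:
  fixes a b :: real
  assumes "1 \<le> a" and "a < b"
  shows "\<exists>n::nat. n \<ge> 1 \<and> a < real (V n) / real (totient n) \<and> real (V n) / real (totient n) < b"
proof -
  define \<epsilon> where "\<epsilon> = b / a - 1"
  have a0: "a > 0" using assms by simp
  have e0: "\<epsilon> > 0" unfolding \<epsilon>_def using assms a0 by (simp add: field_simps)
  have b_eq: "b = a * (1 + \<epsilon>)" unfolding \<epsilon>_def using a0 by (simp add: field_simps)
  define N :: nat where "N = nat \<lceil>1 / \<epsilon>\<rceil> + 1"
  have fac: "a * (real p / (real p - 1)) < b" if "N < p" for p :: nat
  proof -
    have "real (nat \<lceil>1 / \<epsilon>\<rceil>) \<ge> 1 / \<epsilon>" by linarith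
    then have "real N > 1 / \<epsilon>" unfolding N_def by simp
    moreover have "real p - 1 \<ge> real N" using that by simp
    ultimately have x: "real p - 1 > 1 / \<epsilon>" by linarith
    have x0: "real p - 1 > 0" using x e0 by (smt (verit) divide_pos_pos)
    have "1 < \<epsilon> * (real p - 1)" using x e0 by (simp add: field_simps)
    then have "1 / (real p - 1) < \<epsilon>" using x0 by (simp add: field_simps)
    moreover have "real p / (real p - 1) = 1 + 1 / (real p - 1)" using x0 by (simp add: field_simps)
    ultimately have "real p / (real p - 1) < 1 + \<epsilon>" by simp
    then have "a * (real p / (real p - 1)) < a * (1 + \<epsilon>)" using a0 by (rule mult_strict_left_mono)
    then show ?thesis unfolding b_eq .
  qed
  define PR where "PR M = {p::nat. prime p \<and> N < p \<and> p \<le> M}" for M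
  define Q where "Q M = (\<Prod>p\<in>PR M. real p / (real p - 1))" for M
  have finPR: "finite (PR M)" for M unfolding PR_def by (rule finite_subset[of _ "{..M}"]) auto
  have primPR: "\<forall>p\<in>PR M. prime p" for M unfolding PR_def by auto
  have Q1: "Q M = 1" if "M \<le> N" for M
  proof -
    have "PR M = {}" unfolding PR_def using that by auto
    then show ?thesis unfolding Q_def by simp
  qed
  have unb: "\<exists>M. a < Q M"
  proof -
    define K where "K = (\<Prod>p\<in>{p::nat. prime p \<and> p \<le> N}. real p / (real p - 1))"
    have K0: "K > 0" unfolding K_def
    proof (rule prod_pos)
      fix p assume "p \<in> {p::nat. prime p \<and> p \<le> N}"
      then have "p \<ge> 2" using prime_ge_2_nat by auto
      then show "0 < real p / (real p - 1)" by simp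
    qed
    define m where "m = N + nat \<lceil>2 * a * K\<rceil>"
    have m1: "real m \<ge> 2 * a * K" unfolding m_def by linarith
    have mN: "m \<ge> N" unfolding m_def by simp
    define M :: nat where "M = 2 ^ m"
    have "m < M" unfolding M_def by (rule less_exp)
    then have MN: "N \<le> M" using mN by simp
    define P where "P = {p::nat. prime p \<and> p \<le> M}"
    have finP: "finite P" unfolding P_def by (rule finite_subset[of _ "{..M}"]) auto
    have "(\<Sum>n\<in>{1..M}. 1 / real n) \<le> (\<Prod>p\<in>P. real p / (real p - 1))"
    proof -
      have "\<forall>n\<in>{1..M}. n > 0 \<and> prime_factors n \<subseteq> P"
      proof
        fix n assume n: "n \<in> {1..M}"
        have "prime_factors n \<subseteq> P"
        proof
          fix r assume "r \<in> prime_factors n"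
          then have "prime r" "r dvd n" by (auto simp: in_prime_factors_iff)
          moreover have "n > 0" using n by simp
          ultimately have "r \<le> n" by (simp add: dvd_imp_le)
          then show "r \<in> P" unfolding P_def using n \<open>prime r\<close> by auto
        qed
        then show "n > 0 \<and> prime_factors n \<subseteq> P" using n by simp
      qed
      then show ?thesis using recip_bound[OF finP] unfolding P_def by auto
    qed
    moreover have "(\<Prod>p\<in>P. real p / (real p - 1)) = K * Q M"
    proof -
      have PU: "P = {p::nat. prime p \<and> p \<le> N} \<union> PR M" unfolding P_def PR_def using MN by auto
      have fin1: "finite {p::nat. prime p \<and> p \<le> N}" by (rule finite_subset[of _ "{..N}"]) auto
      have disj: "{p::nat. prime p \<and> p \<le> N} \<inter> PR M = {}" by (auto simp: PR_def)
      show ?thesis unfolding K_def Q_def PU by (rule prod.union_disjoint[OF fin1 finPR disj])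
    qed
    moreover have "1 + real m / 2 \<le> (\<Sum>n\<in>{1..M}. 1 / real n)"
      unfolding M_def by (rule harm_pow2)
    ultimately have "a * K < K * Q M" using m1 by linarith
    then have "a < Q M" using K0 by (simp add: mult.commute)
    then show ?thesis by blast
  qed
  define M0 where "M0 = (LEAST M. a < Q M)"
  have aQ: "a < Q M0" unfolding M0_def using unb by (rule LeastI_ex)
  have M0N: "M0 > N"
  proof (rule ccontr)
    assume "\<not> N < M0"
    then have "Q M0 = 1" by (intro Q1) simp
    then show False using aQ assms by simp
  qed
  then obtain M1 where M1: "M0 = Suc M1" by (cases M0) auto
  have nQ: "\<not> a < Q M1" unfolding M0_def
    by (rule not_less_Least) (use M1 in \<open>simp add: M0_def\<close>)
  have pM0: "prime M0"
  proof (rule ccontr)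
    assume np: "\<not> prime M0"
    have "PR M0 = PR M1" unfolding PR_def using np M1 by (auto simp: le_Suc_eq)
    then show False using aQ nQ unfolding Q_def by simp
  qed
  have ins: "PR M0 = insert M0 (PR M1)" "M0 \<notin> PR M1"
    unfolding PR_def using pM0 M1 M0N by (auto simp: le_Suc_eq)
  have QM0: "Q M0 = real M0 / (real M0 - 1) * Q M1"
    unfolding Q_def ins(1) using finPR ins(2) by simp
  have f0: "real M0 / (real M0 - 1) > 0" using pM0 prime_ge_2_nat[of M0] by simp
  have "Q M0 \<le> real M0 / (real M0 - 1) * a"
    unfolding QM0 using nQ f0 by (intro mult_left_mono) auto
  also have "\<dots> < b" using fac[OF M0N] by (simp add: mult.commute)
  finally have Qb: "Q M0 < b" .
  define n where "n = \<Prod>(PR M0)"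
  have n1: "n \<ge> 1" unfolding n_def using primPR[of M0] prime_gt_0_nat
    by (metis One_nat_def Suc_leI prod_pos)
  have "real (V n) / real (totient n) = Q M0"
    unfolding n_def Q_def by (rule ratio_prod[OF finPR primPR])
  then show ?thesis using n1 aQ Qb by auto
qed

end
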